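(* Let $\alpha>0$, let $X_{0-}$ be a real-valued random variable and let $Z$ be a continuous stochastic process with $Z_0=0$, independent of $X_{0-}$, satisfying the crossing property (see context). Let $\underline{\Lambda}$ be the minimal solution of the McKean--Vlasov problem and, for $\Delta>0$, let $\underline{\Lambda}^{\Delta}$ be the minimal solution of the discretized McKean--Vlasov problem (see context). Choose a sequence $\Delta_n>0$ such that the discretizations are nested, i.e. $\Delta_n\mathbb{N}\subseteq \Delta_{n+1}\mathbb{N}$ for all $n\in\mathbb{N}$, and $\lim_{n\to\infty}\Delta_n=0$. Assume in addition that either $\operatorname{law}(X_{0-})$ is atomless or $\operatorname{law}(Z_t)$ is atomless for every $t>0$. Then $\lim_{n\to\infty}\underline{\Lambda}^{\Delta_n}=\underline{\Lambda}$ in $M$, i.e. $\alpha^{-1}\underline{\Lambda}^{\Delta_n}_t\to\alpha^{-1}\underline{\Lambda}_t$ for every $t\in[0,\infty]$ at which $\underline{\Lambda}$ is continuous.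
   Context: Crossing property: for every stopping time $\tau$ with respect to the natural filtration of $X_{0-}+Z$ and every $h>0$, $\mathbb{P}(\tau<\infty,\ \inf_{0\le s\le h}(Z_{\tau+s}-Z_\tau)=0)=0$. $M$ denotes the set of càdlàg increasing functions $\ell:\overline{\mathbb{R}}\to[0,1]$ (on the two-point compactification of $\mathbb{R}$) with $\ell_{0-}=0$ and $\ell_\infty=1$, topologized by: $\ell^n\to\ell$ iff $\ell^n_t\to\ell_t$ for every $t\in[0,\infty]$ that is not a discontinuity point of $\ell$. McKean--Vlasov problem: a deterministic function $\Lambda$ is a solution if, with $X_t=X_{0-}+Z_t-\Lambda_t$ and $\tau=\inf\{t\ge0: X_t\le 0\}$, one has $\Lambda_t=\alpha\,\mathbb{P}(\tau\le t)$ for all $t\ge0$; a solution $\underline{\Lambda}$ is minimal if $\underline{\Lambda}_t\le\Lambda_t$ for all $t\ge 0$ and every solution $\Lambda$ (a unique minimal solution exists). For $\Delta>0$ and an increasing function $\ell$ define $X^\Delta_t[\ell]=X_{0-}+Z_{\Delta\lfloor t/\Delta\rfloor}-\alpha\ell_{\Delta\lfloor t/\Delta\rfloor}$, $\tau^\Delta[\ell]=\inf\{t\ge0:X^\Delta_t[\ell]\le0\}$, $\Gamma_\Delta[\ell]_t=\mathbb{P}(\tau^\Delta[\ell]\le t)$. $\Lambda^\Delta$ solves the discretized McKean--Vlasov problem if $\alpha\Gamma_\Delta[\alpha^{-1}\Lambda^\Delta]=\Lambda^\Delta$; a solution $\underline{\Lambda}^\Delta$ is minimal if $\underline{\Lambda}^\Delta\le\Lambda^\Delta$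 for every solution $\Lambda^\Delta$ (under the stated atomless assumption such a minimal solution exists). *)

theory Defs
  imports "HOL-Probability.Probability"
begin

definition hit_time :: "(real \<Rightarrow> real) \<Rightarrow> ereal" where
  "hit_time f = Inf (ereal ` {t. 0 \<le> t \<and> f t \<le> 0})"

definition natural_filtration :: "'a measure \<Rightarrow> (real \<Rightarrow> 'a \<Rightarrow> real) \<Rightarrow> real \<Rightarrow> 'a measure" where
  "natural_filtration M Y t = sigma (space M)
     {Y s -` B \<inter> space M | s B. s \<in> {0..t} \<and> B \<in> sets borel}"

definition is_stopping_time :: "'a measure \<Rightarrow> (real \<Rightarrow> 'a measure) \<Rightarrow> ('a \<Rightarrow> ereal) \<Rightarrow> bool" where
  "is_stopping_time M F \<tau> \<longleftrightarrow>
     (\<forall>\<omega>\<in>space M. 0 \<le> \<tau> \<omega>) \<and>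
     (\<forall>t\<ge>0. {\<omega>\<in>space M. \<tau> \<omega> \<le> ereal t} \<in> sets (F t))"

definition crossing_property :: "'a measure \<Rightarrow> ('a \<Rightarrow> real) \<Rightarrow> (real \<Rightarrow> 'a \<Rightarrow> real) \<Rightarrow> bool" where
  "crossing_property M X0 Z \<longleftrightarrow>
     (\<forall>\<tau>. is_stopping_time M (natural_filtration M (\<lambda>s \<omega>. X0 \<omega> + Z s \<omega>)) \<tau> \<longrightarrow>
       (\<forall>h>0. AE \<omega> in M. \<not> (\<tau> \<omega> < \<infinity> \<and>
          (INF s\<in>{0..h}. Z (real_of_ereal (\<tau> \<omega>) + s) \<omega> - Z (real_of_ereal (\<tau> \<omega>)) \<omega>) = 0)))"

definition MV_solution :: "'a measure \<Rightarrow> ('a \<Rightarrow> real) \<Rightarrow> (real \<Rightarrow> 'a \<Rightarrow> real) \<Rightarrow> real \<Rightarrow> (real \<Rightarrow> real) \<Rightarrow> bool" where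
  "MV_solution M X0 Z \<alpha> \<Lambda> \<longleftrightarrow>
     (\<forall>t\<ge>0. {\<omega>\<in>space M. hit_time (\<lambda>s. X0 \<omega> + Z s \<omega> - \<Lambda> s) \<le> ereal t} \<in> sets M \<and>
       \<Lambda> t = \<alpha> * measure M {\<omega>\<in>space M. hit_time (\<lambda>s. X0 \<omega> + Z s \<omega> - \<Lambda> s) \<le> ereal t})"

definition MV_minimal_solution :: "'a measure \<Rightarrow> ('a \<Rightarrow> real) \<Rightarrow> (real \<Rightarrow> 'a \<Rightarrow> real) \<Rightarrow> real \<Rightarrow> (real \<Rightarrow> real) \<Rightarrow> bool" where
  "MV_minimal_solution M X0 Z \<alpha> \<Lambda> \<longleftrightarrow>
     MV_solution M X0 Z \<alpha> \<Lambda> \<and>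
     (\<forall>\<Lambda>'. MV_solution M X0 Z \<alpha> \<Lambda>' \<longrightarrow> (\<forall>t\<ge>0. \<Lambda> t \<le> \<Lambda>' t))"

definition grid :: "real \<Rightarrow> real \<Rightarrow> real" where
  "grid \<Delta> t = \<Delta> * of_int \<lfloor>t / \<Delta>\<rfloor>"

definition disc_event :: "'a measure \<Rightarrow> ('a \<Rightarrow> real) \<Rightarrow> (real \<Rightarrow> 'a \<Rightarrow> real) \<Rightarrow> real \<Rightarrow> real \<Rightarrow> (real \<Rightarrow> real) \<Rightarrow> real \<Rightarrow> 'a set" where
  "disc_event M X0 Z \<alpha> \<Delta> l t =
     {\<omega>\<in>space M. hit_time (\<lambda>s. X0 \<omega> + Z (grid \<Delta> s) \<omega> - \<alpha> * l (grid \<Delta> s)) \<le> ereal t}"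

definition Gamma_disc :: "'a measure \<Rightarrow> ('a \<Rightarrow> real) \<Rightarrow> (real \<Rightarrow> 'a \<Rightarrow> real) \<Rightarrow> real \<Rightarrow> real \<Rightarrow> (real \<Rightarrow> real) \<Rightarrow> real \<Rightarrow> real" where
  "Gamma_disc M X0 Z \<alpha> \<Delta> l t = measure M (disc_event M X0 Z \<alpha> \<Delta> l t)"

definition MV_disc_solution :: "'a measure \<Rightarrow> ('a \<Rightarrow> real) \<Rightarrow> (real \<Rightarrow> 'a \<Rightarrow> real) \<Rightarrow> real \<Rightarrow> real \<Rightarrow> (real \<Rightarrow> real) \<Rightarrow> bool" where
  "MV_disc_solution M X0 Z \<alpha> \<Delta> \<Lambda> \<longleftrightarrow>
     (\<forall>t\<ge>0. disc_event M X0 Z \<alpha> \<Delta> (\<lambda>s. \<Lambda> s / \<alpha>) t \<in> sets M \<and>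
       \<alpha> * Gamma_disc M X0 Z \<alpha> \<Delta> (\<lambda>s. \<Lambda> s / \<alpha>) t = \<Lambda> t)"

definition MV_disc_minimal_solution :: "'a measure \<Rightarrow> ('a \<Rightarrow> real) \<Rightarrow> (real \<Rightarrow> 'a \<Rightarrow> real) \<Rightarrow> real \<Rightarrow> real \<Rightarrow> (real \<Rightarrow> real) \<Rightarrow> bool" where
  "MV_disc_minimal_solution M X0 Z \<alpha> \<Delta> \<Lambda> \<longleftrightarrow>
     MV_disc_solution M X0 Z \<alpha> \<Delta> \<Lambda> \<and>
     (\<forall>\<Lambda>'. MV_disc_solution M X0 Z \<alpha> \<Delta> \<Lambda>' \<longrightarrow> (\<forall>t\<ge>0. \<Lambda> t \<le> \<Lambda>' t))"

text \<open>Extension of a function on [0,inf) by 0 to the left of 0 (the 0- convention of the space M).\<close>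
definition ext0 :: "(real \<Rightarrow> real) \<Rightarrow> real \<Rightarrow> real" where
  "ext0 f t = (if t < 0 then 0 else f t)"

end

theory Submission
  imports Defs
begin


lemma grid_nat:
  assumes "\<Delta> > 0" "s \<ge> 0"
  shows "grid \<Delta> s = \<Delta> * real (nat \<lfloor>s/\<Delta>\<rfloor>)" "grid \<Delta> s \<le> s" "s < grid \<Delta> s + \<Delta>"
proof -
  have f0: "\<lfloor>s/\<Delta>\<rfloor> \<ge> 0" using assms by simp
  show 1: "grid \<Delta> s = \<Delta> * real (nat \<lfloor>s/\<Delta>\<rfloor>)" unfolding grid_def using f0 by simp
  have "of_int \<lfloor>s/\<Delta>\<rfloor> \<le> s/\<Delta>" by linarith
  then have "\<Delta> * of_int \<lfloor>s/\<Delta>\<rfloor> \<le> \<Delta> * (s/\<Delta>)" using assms by (intro mult_left_mono) auto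
  then show "grid \<Delta> s \<le> s" unfolding grid_def using assms by simp
  have "s/\<Delta> < of_int \<lfloor>s/\<Delta>\<rfloor> + 1" by linarith
  then show "s < grid \<Delta> s + \<Delta>" unfolding grid_def using assms by (simp add: field_simps)
qed

lemma grid_k: "\<Delta> > 0 \<Longrightarrow> grid \<Delta> (\<Delta> * real k) = \<Delta> * real k"
  unfolding grid_def by simp

lemma nat_floor_k: "\<Delta> > 0 \<Longrightarrow> nat \<lfloor>\<Delta> * real k / \<Delta>\<rfloor> = k"
  by simp

lemma le_floor_iff_nat:
  assumes "\<Delta> > 0" "t \<ge> 0"
  shows "\<Delta> * real k \<le> t \<longleftrightarrow> k \<le> nat \<lfloor>t/\<Delta>\<rfloor>"
proof -
  have "\<Delta> * real k \<le> t \<longleftrightarrow> real k \<le> t/\<Delta>" using assms by (simp add: field_simps)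
  also have "\<dots> \<longleftrightarrow> int k \<le> \<lfloor>t/\<Delta>\<rfloor>" by (simp add: le_floor_iff)
  also have "\<dots> \<longleftrightarrow> k \<le> nat \<lfloor>t/\<Delta>\<rfloor>" using assms by (subst le_nat_iff) auto
  finally show ?thesis .
qed

lemma hit_disc_char:
  fixes h :: "real \<Rightarrow> real"
  assumes "\<Delta> > 0"
  shows "hit_time (\<lambda>s. h (grid \<Delta> s)) \<le> ereal t \<longleftrightarrow> (\<exists>k::nat. \<Delta> * real k \<le> t \<and> h (\<Delta> * real k) \<le> 0)"
proof
  assume "\<exists>k::nat. \<Delta> * real k \<le> t \<and> h (\<Delta> * real k) \<le> 0"
  then obtain k :: nat where k: "\<Delta> * real k \<le> t" "h (\<Delta> * real k) \<le> 0" by blast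
  have "\<Delta> * real k \<in> {s. 0 \<le> s \<and> h (grid \<Delta> s) \<le> 0}" using k assms grid_k[OF assms] by simp
  then have "hit_time (\<lambda>s. h (grid \<Delta> s)) \<le> ereal (\<Delta> * real k)"
    unfolding hit_time_def by (simp add: INF_lower)
  also have "\<dots> \<le> ereal t" using k by simp
  finally show "hit_time (\<lambda>s. h (grid \<Delta> s)) \<le> ereal t" .
next
  let ?S = "{s. 0 \<le> s \<and> h (grid \<Delta> s) \<le> 0}"
  assume H: "hit_time (\<lambda>s. h (grid \<Delta> s)) \<le> ereal t"
  have "?S \<noteq> {}"
  proof
    assume "?S = {}" then have "ereal ` ?S = {}" by blast
    then show False using H unfolding hit_time_def by (simp add: top_ereal_def del: image_is_empty)
  qed
  then obtain s0 where s0: "s0 \<ge> 0" "h (grid \<Delta> s0) \<le> 0" by blast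
  let ?K = "{k::nat. h (\<Delta> * real k) \<le> 0}"
  have "nat \<lfloor>s0/\<Delta>\<rfloor> \<in> ?K" using s0 grid_nat[OF assms s0(1)] by simp
  define k0 where "k0 = (LEAST k. k \<in> ?K)"
  have k0K: "k0 \<in> ?K" unfolding k0_def by (rule LeastI) fact
  have "ereal (\<Delta> * real k0) \<le> hit_time (\<lambda>s. h (grid \<Delta> s))"
    unfolding hit_time_def
  proof (rule INF_greatest)
    fix s assume s: "s \<in> ?S"
    then have "nat \<lfloor>s/\<Delta>\<rfloor> \<in> ?K" using grid_nat[OF assms] by auto
    then have "k0 \<le> nat \<lfloor>s/\<Delta>\<rfloor>" unfolding k0_def by (rule Least_le)
    then have "\<Delta> * real k0 \<le> \<Delta> * real (nat \<lfloor>s/\<Delta>\<rfloor>)" using assms by simp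
    also have "\<dots> \<le> s" using grid_nat[OF assms] s by auto
    finally show "ereal (\<Delta> * real k0) \<le> ereal s" by simp
  qed
  then have "\<Delta> * real k0 \<le> t" using H by (meson ereal_less_eq(3) order_trans)
  then show "\<exists>k::nat. \<Delta> * real k \<le> t \<and> h (\<Delta> * real k) \<le> 0" using k0K by blast
qed

lemma disc_event_char:
  assumes "\<Delta> > 0"
  shows "disc_event M X0 Z \<alpha> \<Delta> l t = {\<omega>\<in>space M. \<exists>k::nat. \<Delta> * real k \<le> t \<and>
            X0 \<omega> + Z (\<Delta> * real k) \<omega> - \<alpha> * l (\<Delta> * real k) \<le> 0}"
  unfolding disc_event_def
  using hit_disc_char[OF assms, of "\<lambda>r. X0 _ + Z r _ - \<alpha> * l r"] by auto

definition fp :: "(real \<Rightarrow> real) \<Rightarrow> real" where "fp f = Inf {y. f y \<le> y}"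

lemma fp_props:
  fixes f :: "real \<Rightarrow> real"
  assumes mo: "mono f" and nn: "\<And>y. 0 \<le> f y" and b: "f b \<le> b"
  shows "f (fp f) = fp f" "\<And>y. f y \<le> y \<Longrightarrow> fp f \<le> y"
proof -
  let ?A = "{y. f y \<le> y}"
  have bdd: "bdd_below ?A" unfolding bdd_below_def using nn by (meson mem_Collect_eq order_trans)
  have ne: "?A \<noteq> {}" using b by blast
  show le: "\<And>y. f y \<le> y \<Longrightarrow> fp f \<le> y" unfolding fp_def using bdd by (simp add: cInf_lower)
  have 1: "f (fp f) \<le> fp f"
  proof (rule ccontr)
    assume "\<not> f (fp f) \<le> fp f"
    then have "Inf ?A < f (fp f)" unfolding fp_def by simp
    then obtain a where a: "a \<in> ?A" "a < f (fp f)" using cInf_lessD[OF ne] by blast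
    have "fp f \<le> a" using le a by simp
    then have "f (fp f) \<le> f a" using mo by (simp add: monoD)
    then show False using a by simp
  qed
  then have "f (f (fp f)) \<le> f (fp f)" using mo by (simp add: monoD)
  then have "fp f \<le> f (fp f)" using le by simp
  then show "f (fp f) = fp f" using 1 by simp
qed

locale mvs = prob_space M for M :: "'a measure" +
  fixes X0 :: "'a \<Rightarrow> real" and Z :: "real \<Rightarrow> 'a \<Rightarrow> real" and \<alpha> :: real
  assumes apos: "\<alpha> > 0" and X0m: "X0 \<in> borel_measurable M"
    and Zm: "\<And>t. t \<ge> 0 \<Longrightarrow> Z t \<in> borel_measurable M"
    and Zc: "\<And>\<omega>. \<omega> \<in> space M \<Longrightarrow> continuous_on {0..} (\<lambda>t. Z t \<omega>)"
begin

lemma Ym: "s \<ge> 0 \<Longrightarrow> (\<lambda>\<omega>. X0 \<omega> + Z s \<omega>) \<in> borel_measurable M"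
  using X0m Zm by simp

definition Yle :: "real \<Rightarrow> real \<Rightarrow> 'a set" where
  "Yle s c = {\<omega>\<in>space M. X0 \<omega> + Z s \<omega> \<le> c}"

lemma Yle_sets: "s \<ge> 0 \<Longrightarrow> Yle s c \<in> sets M"
  unfolding Yle_def using Ym[of s] by measurable

primrec Eb :: "real \<Rightarrow> nat \<Rightarrow> 'a set" where
  "Eb \<Delta> 0 = {}"
| "Eb \<Delta> (Suc k) = Eb \<Delta> k \<union> Yle (\<Delta> * real k) (fp (\<lambda>y. \<alpha> * measure M (Eb \<Delta> k \<union> Yle (\<Delta> * real k) y)))"

definition xx :: "real \<Rightarrow> nat \<Rightarrow> real" where
  "xx \<Delta> k = fp (\<lambda>y. \<alpha> * measure M (Eb \<Delta> k \<union> Yle (\<Delta> * real k) y))"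

lemma Eb_Suc': "Eb \<Delta> (Suc k) = Eb \<Delta> k \<union> Yle (\<Delta> * real k) (xx \<Delta> k)"
  by (simp add: xx_def)

lemma Eb_sets: "\<Delta> \<ge> 0 \<Longrightarrow> Eb \<Delta> k \<in> sets M"
  by (induction k) (auto simp: Yle_sets)

lemma fk_props:
  assumes "\<Delta> \<ge> 0"
  shows "mono (\<lambda>y. \<alpha> * measure M (Eb \<Delta> k \<union> Yle (\<Delta> * real k) y))"
    "\<And>y. 0 \<le> \<alpha> * measure M (Eb \<Delta> k \<union> Yle (\<Delta> * real k) y)"
    "\<alpha> * measure M (Eb \<Delta> k \<union> Yle (\<Delta> * real k) \<alpha>) \<le> \<alpha>"
proof -
  show "mono (\<lambda>y. \<alpha> * measure M (Eb \<Delta> k \<union> Yle (\<Delta> * real k) y))"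
  proof (rule monoI)
    fix x y :: real assume "x \<le> y"
    then have "Eb \<Delta> k \<union> Yle (\<Delta> * real k) x \<subseteq> Eb \<Delta> k \<union> Yle (\<Delta> * real k) y"
      unfolding Yle_def by auto
    then have "measure M (Eb \<Delta> k \<union> Yle (\<Delta> * real k) x) \<le> measure M (Eb \<Delta> k \<union> Yle (\<Delta> * real k) y)"
      using assms by (intro finite_measure_mono) (auto simp: Eb_sets Yle_sets)
    then show "\<alpha> * measure M (Eb \<Delta> k \<union> Yle (\<Delta> * real k) x) \<le> \<alpha> * measure M (Eb \<Delta> k \<union> Yle (\<Delta> * real k) y)"
      using apos by simp
  qed
  show "\<And>y. 0 \<le> \<alpha> * measure M (Eb \<Delta> k \<union> Yle (\<Delta> * real k) y)" using apos by simp
  show "\<alpha> * measure M (Eb \<Delta> k \<union> Yle (\<Delta> * real k) \<alpha>) \<le> \<alpha>"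
    using apos prob_le_1 by (simp add: mult_le_cancel_left1)
qed

lemma xx_fix: "\<Delta> \<ge> 0 \<Longrightarrow> \<alpha> * measure M (Eb \<Delta> (Suc k)) = xx \<Delta> k"
  using fp_props(1)[OF fk_props] unfolding Eb_Suc' xx_def by blast

lemma xx_least: "\<Delta> \<ge> 0 \<Longrightarrow> \<alpha> * measure M (Eb \<Delta> k \<union> Yle (\<Delta> * real k) y) \<le> y \<Longrightarrow> xx \<Delta> k \<le> y"
  using fp_props(2)[OF fk_props] unfolding xx_def by blast

lemma Eb_char: "Eb \<Delta> k = {\<omega>\<in>space M. \<exists>j<k. X0 \<omega> + Z (\<Delta> * real j) \<omega> \<le> xx \<Delta> j}"
proof (induction k)
  case 0 then show ?case by simp
next
  case (Suc k)
  show ?case unfolding Eb_Suc' Suc Yle_def by (auto simp: less_Suc_eq)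
qed

definition Lc :: "real \<Rightarrow> real \<Rightarrow> real" where "Lc \<Delta> t = xx \<Delta> (nat \<lfloor>t/\<Delta>\<rfloor>)"

lemma Lc_sol: assumes "\<Delta> > 0" shows "MV_disc_solution M X0 Z \<alpha> \<Delta> (Lc \<Delta>)"
  unfolding MV_disc_solution_def Gamma_disc_def
proof (intro allI impI)
  fix t :: real assume t: "t \<ge> 0"
  have "disc_event M X0 Z \<alpha> \<Delta> (\<lambda>s. Lc \<Delta> s / \<alpha>) t = Eb \<Delta> (Suc (nat \<lfloor>t/\<Delta>\<rfloor>))"
    unfolding disc_event_char[OF assms] Eb_char Lc_def
    using apos le_floor_iff_nat[OF assms t] assms by (auto simp: less_Suc_eq_le)
  then show "disc_event M X0 Z \<alpha> \<Delta> (\<lambda>s. Lc \<Delta> s / \<alpha>) t \<in> sets M \<and>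
         \<alpha> * measure M (disc_event M X0 Z \<alpha> \<Delta> (\<lambda>s. Lc \<Delta> s / \<alpha>) t) = Lc \<Delta> t"
    using assms Eb_sets[of \<Delta> "Suc (nat \<lfloor>t/\<Delta>\<rfloor>)"] xx_fix[of \<Delta> "nat \<lfloor>t/\<Delta>\<rfloor>"] by (simp add: Lc_def del: Eb.simps)
qed

lemma xx_le:
  assumes D: "\<Delta> > 0"
    and S: "\<And>k. \<exists>B\<in>sets M. {\<omega>\<in>space M. \<exists>j\<le>k. X0 \<omega> + Z (\<Delta> * real j) \<omega> \<le> S (\<Delta> * real j)} \<subseteq> B
                  \<and> \<alpha> * measure M B \<le> S (\<Delta> * real k)"
  shows "xx \<Delta> k \<le> S (\<Delta> * real k)"
proof (induction k rule: less_induct)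
  case (less k)
  obtain B where B: "B \<in> sets M" "{\<omega>\<in>space M. \<exists>j\<le>k. X0 \<omega> + Z (\<Delta> * real j) \<omega> \<le> S (\<Delta> * real j)} \<subseteq> B"
     "\<alpha> * measure M B \<le> S (\<Delta> * real k)" using S by blast
  have "Eb \<Delta> k \<union> Yle (\<Delta> * real k) (S (\<Delta> * real k)) \<subseteq> {\<omega>\<in>space M. \<exists>j\<le>k. X0 \<omega> + Z (\<Delta> * real j) \<omega> \<le> S (\<Delta> * real j)}"
  proof
    fix \<omega> assume "\<omega> \<in> Eb \<Delta> k \<union> Yle (\<Delta> * real k) (S (\<Delta> * real k))"
    then show "\<omega> \<in> {\<omega>\<in>space M. \<exists>j\<le>k. X0 \<omega> + Z (\<Delta> * real j) \<omega> \<le> S (\<Delta> * real j)}"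
    proof
      assume "\<omega> \<in> Eb \<Delta> k"
      then obtain j where j: "\<omega> \<in> space M" "j < k" "X0 \<omega> + Z (\<Delta> * real j) \<omega> \<le> xx \<Delta> j"
        unfolding Eb_char by blast
      then have "X0 \<omega> + Z (\<Delta> * real j) \<omega> \<le> S (\<Delta> * real j)" using less[of j] by linarith
      then show ?thesis using j by (auto intro!: exI[of _ j])
    next
      assume "\<omega> \<in> Yle (\<Delta> * real k) (S (\<Delta> * real k))"
      then show ?thesis unfolding Yle_def by auto
    qed
  qed
  then have "measure M (Eb \<Delta> k \<union> Yle (\<Delta> * real k) (S (\<Delta> * real k))) \<le> measure M B"
    using B by (intro finite_measure_mono) auto
  then have "\<alpha> * measure M (Eb \<Delta> k \<union> Yle (\<Delta> * real k) (S (\<Delta> * real k))) \<le> S (\<Delta> * real k)"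
    using B apos by (meson mult_left_mono less_imp_le order_trans)
  then show ?case using xx_least D by simp
qed

lemma disc_min_le:
  assumes D: "\<Delta> > 0" and min: "MV_disc_minimal_solution M X0 Z \<alpha> \<Delta> \<Lambda>d"
    and S: "\<And>k. \<exists>B\<in>sets M. {\<omega>\<in>space M. \<exists>j\<le>k. X0 \<omega> + Z (\<Delta> * real j) \<omega> \<le> S (\<Delta> * real j)} \<subseteq> B
                  \<and> \<alpha> * measure M B \<le> S (\<Delta> * real k)"
    and t: "t \<ge> 0"
  shows "\<Lambda>d t \<le> S (\<Delta> * real (nat \<lfloor>t/\<Delta>\<rfloor>))"
proof -
  have "\<Lambda>d t \<le> Lc \<Delta> t" using min Lc_sol[OF D] t unfolding MV_disc_minimal_solution_def by blast
  also have "\<dots> \<le> S (\<Delta> * real (nat \<lfloor>t/\<Delta>\<rfloor>))" unfolding Lc_def by (rule xx_le[OF D S])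
  finally show ?thesis .
qed

definition DS :: "real \<Rightarrow> (real \<Rightarrow> real) \<Rightarrow> real \<Rightarrow> 'a set" where
  "DS \<Delta> L t = {\<omega>\<in>space M. \<exists>k::nat. \<Delta> * real k \<le> t \<and> X0 \<omega> + Z (\<Delta> * real k) \<omega> \<le> L (\<Delta> * real k)}"

lemma ds_props:
  assumes D: "\<Delta> > 0" and sol: "MV_disc_solution M X0 Z \<alpha> \<Delta> \<Lambda>d" and t: "t \<ge> 0"
  shows "DS \<Delta> \<Lambda>d t \<in> sets M" "\<Lambda>d t = \<alpha> * measure M (DS \<Delta> \<Lambda>d t)"
proof -
  have e: "disc_event M X0 Z \<alpha> \<Delta> (\<lambda>s. \<Lambda>d s / \<alpha>) t = DS \<Delta> \<Lambda>d t"
    unfolding disc_event_char[OF D] DS_def using apos by simp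
  have "disc_event M X0 Z \<alpha> \<Delta> (\<lambda>s. \<Lambda>d s / \<alpha>) t \<in> sets M \<and>
       \<alpha> * measure M (disc_event M X0 Z \<alpha> \<Delta> (\<lambda>s. \<Lambda>d s / \<alpha>) t) = \<Lambda>d t"
    using sol t unfolding MV_disc_solution_def Gamma_disc_def by blast
  then show "DS \<Delta> \<Lambda>d t \<in> sets M" "\<Lambda>d t = \<alpha> * measure M (DS \<Delta> \<Lambda>d t)"
    unfolding e by auto
qed

lemma ds_nonneg:
  assumes "\<Delta> > 0" "MV_disc_solution M X0 Z \<alpha> \<Delta> \<Lambda>d" "t \<ge> 0"
  shows "0 \<le> \<Lambda>d t"
  using ds_props[OF assms] apos by simp

lemma ds_mono:
  assumes D: "\<Delta> > 0" and sol: "MV_disc_solution M X0 Z \<alpha> \<Delta> \<Lambda>d" and st: "0 \<le> s" "s \<le> t"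
  shows "\<Lambda>d s \<le> \<Lambda>d t"
proof -
  have "DS \<Delta> \<Lambda>d s \<subseteq> DS \<Delta> \<Lambda>d t" unfolding DS_def using st by force
  then have "measure M (DS \<Delta> \<Lambda>d s) \<le> measure M (DS \<Delta> \<Lambda>d t)"
    using ds_props[OF D sol] st by (intro finite_measure_mono) auto
  then show ?thesis using ds_props[OF D sol] st apos by simp
qed

lemma ds_grid:
  assumes D: "\<Delta> > 0" and sol: "MV_disc_solution M X0 Z \<alpha> \<Delta> \<Lambda>d" and t: "t \<ge> 0"
  shows "\<Lambda>d (\<Delta> * real (nat \<lfloor>t/\<Delta>\<rfloor>)) = \<Lambda>d t"
proof -
  have g: "0 \<le> \<Delta> * real (nat \<lfloor>t/\<Delta>\<rfloor>)" using D by simp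
  have "DS \<Delta> \<Lambda>d (\<Delta> * real (nat \<lfloor>t/\<Delta>\<rfloor>)) = DS \<Delta> \<Lambda>d t"
    unfolding DS_def using le_floor_iff_nat[OF D t] D by auto
  then show ?thesis using ds_props(2)[OF D sol t] ds_props(2)[OF D sol g] by simp
qed

end



lemma hit_le: "0 \<le> r \<Longrightarrow> f r \<le> 0 \<Longrightarrow> hit_time f \<le> ereal r"
  unfolding hit_time_def by (rule INF_lower) auto

lemma hit_nonneg: "0 \<le> hit_time f"
  unfolding hit_time_def by (rule INF_greatest) auto

locale mvs2 = mvs M X0 Z \<alpha> for M :: "'a measure" and X0 Z \<alpha> +
  fixes \<Lambda> :: "real \<Rightarrow> real" and \<Lambda>d :: "nat \<Rightarrow> real \<Rightarrow> real" and \<Delta> :: "nat \<Rightarrow> real"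
  assumes msol: "MV_minimal_solution M X0 Z \<alpha> \<Lambda>"
    and Dpos: "\<And>n. \<Delta> n > 0"
    and dmin: "\<And>n. MV_disc_minimal_solution M X0 Z \<alpha> (\<Delta> n) (\<Lambda>d n)"
    and nest: "\<And>n. {\<Delta> n * real k | k. k \<in> (UNIV :: nat set)} \<subseteq> {\<Delta> (Suc n) * real k | k. k \<in> (UNIV :: nat set)}"
    and D0: "\<Delta> \<longlonglongrightarrow> 0"
    and cross: "crossing_property M X0 Z"
begin

lemma dsol: "MV_disc_solution M X0 Z \<alpha> (\<Delta> n) (\<Lambda>d n)"
  using dmin unfolding MV_disc_minimal_solution_def by blast

definition CE :: "(real \<Rightarrow> real) \<Rightarrow> real \<Rightarrow> 'a set" where
  "CE L t = {\<omega>\<in>space M. hit_time (\<lambda>s. X0 \<omega> + Z s \<omega> - L s) \<le> ereal t}"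

lemma Lam_props: "t \<ge> 0 \<Longrightarrow> CE \<Lambda> t \<in> sets M" "t \<ge> 0 \<Longrightarrow> \<Lambda> t = \<alpha> * measure M (CE \<Lambda> t)"
  using msol unfolding MV_minimal_solution_def MV_solution_def CE_def by blast+

lemma Lam_mono: assumes "0 \<le> s" "s \<le> t" shows "\<Lambda> s \<le> \<Lambda> t"
proof -
  have "CE \<Lambda> s \<subseteq> CE \<Lambda> t" unfolding CE_def using assms by (auto intro: order_trans)
  then have "measure M (CE \<Lambda> s) \<le> measure M (CE \<Lambda> t)"
    using Lam_props assms by (intro finite_measure_mono) auto
  then show ?thesis using Lam_props assms apos by simp
qed

lemma nest_k: "\<exists>i::nat. \<Delta> n * real k = \<Delta> (Suc n) * real i"
  using nest[of n] by blast

lemma Ld_le_Lam: assumes t: "t \<ge> 0" shows "\<Lambda>d n t \<le> \<Lambda> t"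
proof -
  have "\<Lambda>d n t \<le> \<Lambda> (\<Delta> n * real (nat \<lfloor>t/\<Delta> n\<rfloor>))"
  proof (rule disc_min_le[OF Dpos dmin _ t])
    fix k
    show "\<exists>B\<in>sets M. {\<omega> \<in> space M. \<exists>j\<le>k. X0 \<omega> + Z (\<Delta> n * real j) \<omega> \<le> \<Lambda> (\<Delta> n * real j)} \<subseteq> B \<and>
           \<alpha> * measure M B \<le> \<Lambda> (\<Delta> n * real k)"
    proof (intro bexI conjI)
      show "CE \<Lambda> (\<Delta> n * real k) \<in> sets M" using Lam_props Dpos[of n] by simp
      show "\<alpha> * measure M (CE \<Lambda> (\<Delta> n * real k)) \<le> \<Lambda> (\<Delta> n * real k)" using Lam_props Dpos[of n] by simp
      show "{\<omega> \<in> space M. \<exists>j\<le>k. X0 \<omega> + Z (\<Delta> n * real j) \<omega> \<le> \<Lambda> (\<Delta> n * real j)} \<subseteq> CE \<Lambda> (\<Delta> n * real k)"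
      proof safe
        fix \<omega> j assume "\<omega> \<in> space M" "j \<le> k" "X0 \<omega> + Z (\<Delta> n * real j) \<omega> \<le> \<Lambda> (\<Delta> n * real j)"
        moreover have "hit_time (\<lambda>s. X0 \<omega> + Z s \<omega> - \<Lambda> s) \<le> ereal (\<Delta> n * real j)"
          using calculation Dpos[of n] by (intro hit_le) auto
        moreover have "\<Delta> n * real j \<le> \<Delta> n * real k" using calculation Dpos[of n] by simp
        ultimately show "\<omega> \<in> CE \<Lambda> (\<Delta> n * real k)" unfolding CE_def by (auto intro: order_trans)
      qed
    qed
  qed
  also have "\<dots> \<le> \<Lambda> t" using Dpos[of n] grid_nat[OF Dpos t] by (intro Lam_mono) auto
  finally show ?thesis .
qed

lemma Ld_mono_n: assumes t: "t \<ge> 0" shows "\<Lambda>d n t \<le> \<Lambda>d (Suc n) t"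
proof -
  have "\<Lambda>d n t \<le> \<Lambda>d (Suc n) (\<Delta> n * real (nat \<lfloor>t/\<Delta> n\<rfloor>))"
  proof (rule disc_min_le[OF Dpos dmin _ t])
    fix k
    let ?B = "DS (\<Delta> (Suc n)) (\<Lambda>d (Suc n)) (\<Delta> n * real k)"
    show "\<exists>B\<in>sets M. {\<omega> \<in> space M. \<exists>j\<le>k. X0 \<omega> + Z (\<Delta> n * real j) \<omega> \<le> \<Lambda>d (Suc n) (\<Delta> n * real j)} \<subseteq> B \<and>
           \<alpha> * measure M B \<le> \<Lambda>d (Suc n) (\<Delta> n * real k)"
    proof (intro bexI conjI)
      show "?B \<in> sets M" using ds_props[OF Dpos dsol] Dpos[of n] by simp
      show "\<alpha> * measure M ?B \<le> \<Lambda>d (Suc n) (\<Delta> n * real k)" using ds_props[OF Dpos dsol] Dpos[of n] by simp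
      show "{\<omega> \<in> space M. \<exists>j\<le>k. X0 \<omega> + Z (\<Delta> n * real j) \<omega> \<le> \<Lambda>d (Suc n) (\<Delta> n * real j)} \<subseteq> ?B"
      proof safe
        fix \<omega> j assume a: "\<omega> \<in> space M" "j \<le> k" "X0 \<omega> + Z (\<Delta> n * real j) \<omega> \<le> \<Lambda>d (Suc n) (\<Delta> n * real j)"
        obtain i where i: "\<Delta> n * real j = \<Delta> (Suc n) * real i" using nest_k by blast
        have "\<Delta> n * real j \<le> \<Delta> n * real k" using a Dpos[of n] by simp
        then show "\<omega> \<in> ?B" unfolding DS_def using a i by (auto intro!: exI[of _ i])
      qed
    qed
  qed
  also have "\<dots> \<le> \<Lambda>d (Suc n) t" using Dpos[of n] grid_nat[OF Dpos t] by (intro ds_mono[OF Dpos dsol]) auto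
  finally show ?thesis .
qed

lemma Ld_incseq: "t \<ge> 0 \<Longrightarrow> incseq (\<lambda>n. \<Lambda>d n t)"
  using Ld_mono_n by (simp add: incseq_SucI)

definition L :: "real \<Rightarrow> real" where "L t = (SUP n. \<Lambda>d n t)"

lemma L_lim: assumes "t \<ge> 0" shows "(\<lambda>n. \<Lambda>d n t) \<longlonglongrightarrow> L t"
  unfolding L_def using Ld_incseq[OF assms] Ld_le_Lam[OF assms]
  by (intro LIMSEQ_incseq_SUP) (auto simp: bdd_above_def)

lemma Ld_le_L: "t \<ge> 0 \<Longrightarrow> \<Lambda>d n t \<le> L t"
  using L_lim Ld_incseq by (metis incseq_le)

lemma L_le_Lam: "t \<ge> 0 \<Longrightarrow> L t \<le> \<Lambda> t"
  using L_lim Ld_le_Lam by (metis LIMSEQ_le_const2)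

lemma L_nonneg: "t \<ge> 0 \<Longrightarrow> 0 \<le> L t"
  using Ld_le_L[of t 0] ds_nonneg[OF Dpos dsol, of t 0] by linarith

lemma L_mono: assumes "0 \<le> s" "s \<le> t" shows "L s \<le> L t"
proof -
  have "\<Lambda>d n s \<le> \<Lambda>d n t" for n using ds_mono[OF Dpos dsol] assms by blast
  then show ?thesis using L_lim assms by (meson LIMSEQ_le order_trans)
qed

definition Lp :: "real \<Rightarrow> real" where "Lp t = Inf (L ` {t<..})"

lemma Lbdd: "t \<ge> 0 \<Longrightarrow> bdd_below (L ` {t<..})"
  by (rule bdd_belowI2[of _ 0]) (simp add: L_nonneg)

lemma Lp_le_L: "0 \<le> r \<Longrightarrow> r < v \<Longrightarrow> Lp r \<le> L v"
  unfolding Lp_def using Lbdd by (auto intro: cInf_lower)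

lemma L_le_Lp: assumes "t \<ge> 0" shows "L t \<le> Lp t"
  unfolding Lp_def using assms by (intro cInf_greatest) (auto intro: L_mono)

lemma Lp_mono: assumes "0 \<le> s" "s \<le> t" shows "Lp s \<le> Lp t"
  unfolding Lp_def using assms Lbdd[of s] by (intro cInf_superset_mono) auto

lemma Lp_usc: assumes "r \<ge> 0" "e > 0" shows "\<exists>v>r. L v < Lp r + e"
proof -
  have "Inf (L ` {r<..}) < Lp r + e" using assms unfolding Lp_def by simp
  then obtain x where "x \<in> L ` {r<..}" "x < Lp r + e" using cInf_lessD[of "L ` {r<..}"] by force
  then show ?thesis by auto
qed


lemma Yc: "\<omega> \<in> space M \<Longrightarrow> continuous_on {0..} (\<lambda>s. X0 \<omega> + Z s \<omega>)"
  using Zc by (intro continuous_on_add continuous_on_const) auto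

lemma lsc_lim:
  assumes om: "\<omega> \<in> space M" and r: "rr \<longlonglongrightarrow> r" and nn: "\<And>m. rr m \<ge> 0" and e: "ee \<longlonglongrightarrow> 0"
    and le: "\<And>m. X0 \<omega> + Z (rr m) \<omega> - Lp (rr m) \<le> ee m"
  shows "r \<ge> 0" "X0 \<omega> + Z r \<omega> - Lp r \<le> 0"
proof -
  show r0: "r \<ge> 0" using r nn by (intro LIMSEQ_le_const) auto
  have Yl: "(\<lambda>m. X0 \<omega> + Z (rr m) \<omega>) \<longlonglongrightarrow> X0 \<omega> + Z r \<omega>"
    using continuous_on_tendsto_compose[OF Yc[OF om] r] r0 nn by auto
  have "X0 \<omega> + Z r \<omega> \<le> Lp r"
  proof (rule field_le_epsilon)
    fix e' :: real assume e': "0 < e'"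
    obtain v where v: "v > r" "L v < Lp r + e'" using Lp_usc[OF r0 e'] by blast
    have ev: "eventually (\<lambda>m. rr m < v) sequentially" using order_tendstoD(2)[OF r v(1)] .
    have ev2: "eventually (\<lambda>m. X0 \<omega> + Z (rr m) \<omega> - ee m \<le> Lp r + e') sequentially"
      using ev
    proof eventually_elim
      case (elim m)
      have "Lp (rr m) \<le> L v" using Lp_le_L[OF nn elim] .
      then show ?case using le[of m] v by linarith
    qed
    have lim: "(\<lambda>m. X0 \<omega> + Z (rr m) \<omega> - ee m) \<longlonglongrightarrow> X0 \<omega> + Z r \<omega> - 0"
      using Yl e by (intro tendsto_diff)
    show "X0 \<omega> + Z r \<omega> \<le> Lp r + e'"
      using tendsto_le[OF trivial_limit_sequentially tendsto_const lim ev2] by simp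
  qed
  then show "X0 \<omega> + Z r \<omega> - Lp r \<le> 0" by simp
qed

definition H :: "'a \<Rightarrow> ereal" where "H \<omega> = hit_time (\<lambda>s. X0 \<omega> + Z s \<omega> - Lp s)"

lemma attain:
  assumes om: "\<omega> \<in> space M" and fin: "H \<omega> \<noteq> \<infinity>"
  shows "\<exists>T\<ge>0. H \<omega> = ereal T \<and> X0 \<omega> + Z T \<omega> - Lp T \<le> 0"
proof -
  let ?S = "{s. 0 \<le> s \<and> X0 \<omega> + Z s \<omega> - Lp s \<le> 0}"
  have ne: "?S \<noteq> {}"
  proof
    assume "?S = {}" then have "ereal ` ?S = {}" by blast
    then show False using fin unfolding H_def hit_time_def by (simp add: top_ereal_def del: image_is_empty)
  qed
  have bdd: "bdd_below ?S" by (rule bdd_belowI[of _ 0]) auto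
  define T where "T = Inf ?S"
  have HT: "H \<omega> = ereal T" unfolding H_def hit_time_def T_def using ereal_Inf'[OF bdd ne] by simp
  have T0: "T \<ge> 0" unfolding T_def using ne by (intro cInf_greatest) auto
  have "\<forall>m. \<exists>r. r \<in> ?S \<and> r < T + inverse (real (Suc m))"
  proof
    fix m
    have "Inf ?S < T + inverse (real (Suc m))" unfolding T_def by simp
    then show "\<exists>r. r \<in> ?S \<and> r < T + inverse (real (Suc m))" using cInf_lessD[OF ne] by blast
  qed
  then obtain rr where rr: "\<And>m. rr m \<in> ?S" "\<And>m. rr m < T + inverse (real (Suc m))" by metis
  have rrT: "T \<le> rr m" for m unfolding T_def by (rule cInf_lower[OF rr(1) bdd])
  have "(\<lambda>m. T + inverse (real (Suc m))) \<longlonglongrightarrow> T + 0"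
    by (intro tendsto_add tendsto_const LIMSEQ_inverse_real_of_nat)
  then have lim': "(\<lambda>m. T + inverse (real (Suc m))) \<longlonglongrightarrow> T" by simp
  have "rr \<longlonglongrightarrow> T"
  proof (rule tendsto_sandwich[OF _ _ tendsto_const lim'])
    show "\<forall>\<^sub>F n in sequentially. T \<le> rr n" using rrT by simp
    show "\<forall>\<^sub>F n in sequentially. rr n \<le> T + inverse (real (Suc n))" using rr(2) by (simp add: less_imp_le)
  qed
  then have "X0 \<omega> + Z T \<omega> - Lp T \<le> 0"
    using lsc_lim(2)[OF om _ _ tendsto_const, of rr T] rr(1) by auto
  then show ?thesis using HT T0 by blast
qed

definition Dt :: "real \<Rightarrow> real set" where "Dt t = {q. q \<in> \<rat> \<and> 0 \<le> q \<and> q \<le> t} \<union> {t}"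

lemma Dt_countable: "countable (Dt t)"
proof -
  have "countable {q. q \<in> \<rat> \<and> 0 \<le> q \<and> q \<le> t}" by (rule countable_subset[OF _ countable_rat]) auto
  then show ?thesis unfolding Dt_def by simp
qed

lemma hit_char:
  assumes om: "\<omega> \<in> space M" and t: "t \<ge> 0"
  shows "H \<omega> \<le> ereal t \<longleftrightarrow> (\<forall>m. \<exists>q\<in>Dt t. X0 \<omega> + Z q \<omega> \<le> Lp q + inverse (real (Suc m)))"
proof
  assume Ht: "H \<omega> \<le> ereal t"
  then have "H \<omega> \<noteq> \<infinity>" by auto
  then obtain T where T: "T \<ge> 0" "H \<omega> = ereal T" "X0 \<omega> + Z T \<omega> - Lp T \<le> 0" using attain[OF om] by blast
  have Tt: "T \<le> t" using Ht T by simp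
  show "\<forall>m. \<exists>q\<in>Dt t. X0 \<omega> + Z q \<omega> \<le> Lp q + inverse (real (Suc m))"
  proof
    fix m
    let ?e = "inverse (real (Suc m))"
    have e: "?e > 0" by simp
    show "\<exists>q\<in>Dt t. X0 \<omega> + Z q \<omega> \<le> Lp q + ?e"
    proof (cases "T = t")
      case True
      have "X0 \<omega> + Z T \<omega> \<le> Lp T + ?e" using T(3) e by linarith
      then have "X0 \<omega> + Z t \<omega> \<le> Lp t + ?e" using True by simp
      moreover have "t \<in> Dt t" unfolding Dt_def by simp
      ultimately show ?thesis by blast
    next
      case False
      then have Tlt: "T < t" using Tt by simp
      obtain d where d: "d > 0" "\<And>x'. x' \<in> {0..} \<Longrightarrow> dist x' T < d \<Longrightarrow>
          dist (X0 \<omega> + Z x' \<omega>) (X0 \<omega> + Z T \<omega>) < ?e"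
        using Yc[OF om] T(1) e unfolding continuous_on_iff by (metis atLeast_iff)
      have "T < min t (T + d)" using Tlt d by simp
      then obtain q where q: "q \<in> \<rat>" "T < q" "q < min t (T + d)" using Rats_dense_in_real by blast
      have "dist (X0 \<omega> + Z q \<omega>) (X0 \<omega> + Z T \<omega>) < ?e"
        using q T(1) by (intro d(2)) (auto simp: dist_real_def)
      then have "X0 \<omega> + Z q \<omega> < X0 \<omega> + Z T \<omega> + ?e" by (simp add: dist_real_def abs_less_iff)
      moreover have "Lp T \<le> Lp q" using q T(1) by (intro Lp_mono) auto
      ultimately have "X0 \<omega> + Z q \<omega> \<le> Lp q + ?e" using T(3) by linarith
      moreover have "q \<in> Dt t" unfolding Dt_def using q T(1) by auto
      ultimately show ?thesis by blast
    qed
  qed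
next
  assume A: "\<forall>m. \<exists>q\<in>Dt t. X0 \<omega> + Z q \<omega> \<le> Lp q + inverse (real (Suc m))"
  then obtain q where q: "\<And>m. q m \<in> Dt t" "\<And>m. X0 \<omega> + Z (q m) \<omega> \<le> Lp (q m) + inverse (real (Suc m))"
    by metis
  have qi: "q m \<in> {0..t}" for m using q(1)[of m] t unfolding Dt_def by auto
  obtain l \<sigma> where l: "l \<in> {0..t}" "strict_mono \<sigma>" "(q \<circ> \<sigma>) \<longlonglongrightarrow> l"
    using seq_compactE[OF compact_imp_seq_compact[OF compact_Icc[of 0 t]]] qi by metis
  have e: "((\<lambda>n. inverse (real (Suc n))) \<circ> \<sigma>) \<longlonglongrightarrow> 0"
    using LIMSEQ_subseq_LIMSEQ[OF LIMSEQ_inverse_real_of_nat l(2)] .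
  have "X0 \<omega> + Z l \<omega> - Lp l \<le> 0"
    using q(2) qi by (intro lsc_lim(2)[OF om l(3) _ e]) (auto simp: algebra_simps)
  then have "H \<omega> \<le> ereal l" unfolding H_def using l(1) by (intro hit_le) auto
  then show "H \<omega> \<le> ereal t" using l(1) by (auto intro: order_trans)
qed

lemma E_eq:
  assumes t: "t \<ge> 0"
  shows "{\<omega>\<in>space M. H \<omega> \<le> ereal t} = (\<Inter>m. \<Union>q\<in>Dt t. Yle q (Lp q + inverse (real (Suc m))))"
proof (rule set_eqI)
  fix \<omega>
  show "\<omega> \<in> {\<omega>\<in>space M. H \<omega> \<le> ereal t} \<longleftrightarrow> \<omega> \<in> (\<Inter>m. \<Union>q\<in>Dt t. Yle q (Lp q + inverse (real (Suc m))))"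
  proof
    assume "\<omega> \<in> {\<omega>\<in>space M. H \<omega> \<le> ereal t}"
    then show "\<omega> \<in> (\<Inter>m. \<Union>q\<in>Dt t. Yle q (Lp q + inverse (real (Suc m))))"
      using hit_char[OF _ t] unfolding Yle_def by auto
  next
    assume a: "\<omega> \<in> (\<Inter>m. \<Union>q\<in>Dt t. Yle q (Lp q + inverse (real (Suc m))))"
    then have om: "\<omega> \<in> space M" unfolding Yle_def by auto
    have "\<forall>m. \<exists>q\<in>Dt t. X0 \<omega> + Z q \<omega> \<le> Lp q + inverse (real (Suc m))"
      using a unfolding Yle_def by auto
    then show "\<omega> \<in> {\<omega>\<in>space M. H \<omega> \<le> ereal t}" using hit_char[OF om t] om by auto
  qed
qed

lemma Dt_nonneg: "q \<in> Dt t \<Longrightarrow> t \<ge> 0 \<Longrightarrow> 0 \<le> q \<and> q \<le> t"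
  unfolding Dt_def by auto

lemma E_sets: assumes t: "t \<ge> 0" shows "{\<omega>\<in>space M. H \<omega> \<le> ereal t} \<in> sets M"
  unfolding E_eq[OF t]
proof (intro sets.countable_INT' sets.countable_UN')
  show "countable (UNIV :: nat set)" by simp
  show "(UNIV :: nat set) \<noteq> {}" by simp
  show "range (\<lambda>m. \<Union>q\<in>Dt t. Yle q (Lp q + inverse (real (Suc m)))) \<subseteq> sets M"
    using Dt_countable Dt_nonneg t Yle_sets by (auto intro!: sets.countable_UN')
qed

abbreviation FF :: "real \<Rightarrow> 'a measure" where
  "FF t \<equiv> natural_filtration M (\<lambda>s \<omega>. X0 \<omega> + Z s \<omega>) t"

lemma FF_sets: "sets (FF t) = sigma_sets (space M)
     {(\<lambda>\<omega>. X0 \<omega> + Z s \<omega>) -` B \<inter> space M | s B. s \<in> {0..t} \<and> B \<in> sets borel}"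
  unfolding natural_filtration_def by (rule sets_measure_of) auto

lemma Yle_FF: "0 \<le> q \<Longrightarrow> q \<le> t \<Longrightarrow> Yle q c \<in> sets (FF t)"
proof -
  assume "0 \<le> q" "q \<le> t"
  then have "Yle q c \<in> {(\<lambda>\<omega>. X0 \<omega> + Z s \<omega>) -` B \<inter> space M | s B. s \<in> {0..t} \<and> B \<in> sets borel}"
    unfolding Yle_def by (intro CollectI exI[of _ q] exI[of _ "{..c}"]) auto
  then show ?thesis unfolding FF_sets by (rule sigma_sets.Basic)
qed

lemma E_FF: assumes t: "t \<ge> 0" shows "{\<omega>\<in>space M. H \<omega> \<le> ereal t} \<in> sets (FF t)"
  unfolding E_eq[OF t]
proof (intro sets.countable_INT' sets.countable_UN')
  show "countable (UNIV :: nat set)" by simp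
  show "(UNIV :: nat set) \<noteq> {}" by simp
  show "range (\<lambda>m. \<Union>q\<in>Dt t. Yle q (Lp q + inverse (real (Suc m)))) \<subseteq> sets (FF t)"
    using Dt_countable Dt_nonneg t Yle_FF by (auto intro!: sets.countable_UN')
qed

lemma H_stop: "is_stopping_time M FF H"
  unfolding is_stopping_time_def H_def[symmetric] using E_FF hit_nonneg unfolding H_def by auto


abbreviation EE :: "real \<Rightarrow> 'a set" where "EE t \<equiv> {\<omega>\<in>space M. H \<omega> \<le> ereal t}"

lemma L_le_E: assumes s: "s \<ge> 0" shows "L s \<le> \<alpha> * measure M (EE s)"
proof -
  have "\<Lambda>d n s \<le> \<alpha> * measure M (EE s)" for n
  proof -
    have "DS (\<Delta> n) (\<Lambda>d n) s \<subseteq> EE s"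
    proof
      fix \<omega> assume "\<omega> \<in> DS (\<Delta> n) (\<Lambda>d n) s"
      then obtain k :: nat where k: "\<omega> \<in> space M" "\<Delta> n * real k \<le> s"
        "X0 \<omega> + Z (\<Delta> n * real k) \<omega> \<le> \<Lambda>d n (\<Delta> n * real k)" unfolding DS_def by blast
      have g0: "0 \<le> \<Delta> n * real k" using Dpos[of n] by simp
      have "\<Lambda>d n (\<Delta> n * real k) \<le> Lp (\<Delta> n * real k)"
        using Ld_le_L[OF g0] L_le_Lp[OF g0] by (rule order_trans)
      then have "H \<omega> \<le> ereal (\<Delta> n * real k)" unfolding H_def using k g0 by (intro hit_le) auto
      then show "\<omega> \<in> EE s" using k by (auto intro: order_trans)
    qed
    then have "measure M (DS (\<Delta> n) (\<Lambda>d n) s) \<le> measure M (EE s)"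
      using E_sets[OF s] by (intro finite_measure_mono) auto
    then show ?thesis using ds_props(2)[OF Dpos dsol s] apos by simp
  qed
  then show ?thesis using L_lim[OF s] by (intro LIMSEQ_le_const2) auto
qed

lemma Lp_le_E: assumes t: "t \<ge> 0" shows "Lp t \<le> \<alpha> * measure M (EE t)"
proof -
  define A where "A m = EE (t + inverse (real (Suc m)))" for m
  have As: "range A \<subseteq> sets M" unfolding A_def using t by (auto intro!: E_sets)
  have dec: "decseq A"
  proof (rule decseq_SucI)
    fix m
    have "inverse (real (Suc (Suc m))) \<le> inverse (real (Suc m))" by (simp add: field_simps)
    then show "A (Suc m) \<subseteq> A m" unfolding A_def by (auto intro: order_trans)
  qed
  have IA: "\<Inter> (range A) = EE t"
  proof (rule set_eqI)
    fix \<omega>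
    show "\<omega> \<in> \<Inter> (range A) \<longleftrightarrow> \<omega> \<in> EE t"
    proof
      assume a: "\<omega> \<in> \<Inter> (range A)"
      then have om: "\<omega> \<in> space M" unfolding A_def by auto
      have all: "H \<omega> \<le> ereal (t + inverse (real (Suc m)))" for m using a unfolding A_def by auto
      have "H \<omega> \<le> ereal t"
      proof (cases "H \<omega>")
        case (real x)
        show ?thesis
        proof (rule ccontr)
          assume "\<not> H \<omega> \<le> ereal t"
          then have "0 < x - t" using real by simp
          then obtain m where "inverse (real (Suc m)) < x - t" using reals_Archimedean by blast
          then show False using all[of m] real by simp
        qed
      next
        case PInf then show ?thesis using all[of 0] by simp
      next
        case MInf then show ?thesis by simp
      qed
      then show "\<omega> \<in> EE t" using om by simp
    next
      assume "\<omega> \<in> EE t"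
      then show "\<omega> \<in> \<Inter> (range A)" unfolding A_def by (auto intro: order_trans)
    qed
  qed
  have lim: "(\<lambda>m. \<alpha> * measure M (A m)) \<longlonglongrightarrow> \<alpha> * measure M (EE t)"
    using finite_Lim_measure_decseq[OF As dec] IA by (intro tendsto_mult_left) simp
  have "Lp t \<le> \<alpha> * measure M (A m)" for m
  proof -
    have "Lp t \<le> L (t + inverse (real (Suc m)))" using t by (intro Lp_le_L) auto
    also have "\<dots> \<le> \<alpha> * measure M (A m)" unfolding A_def using t by (intro L_le_E) auto
    finally show ?thesis .
  qed
  then show ?thesis using lim by (intro LIMSEQ_le_const) auto
qed

lemma E_le_L:
  assumes t: "t \<ge> 0" and h: "h > 0"
  shows "\<alpha> * measure M (EE t) \<le> L (t + h)"
proof -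
  have "AE \<omega> in M. \<not> (H \<omega> < \<infinity> \<and>
          (INF s\<in>{0..h}. Z (real_of_ereal (H \<omega>) + s) \<omega> - Z (real_of_ereal (H \<omega>)) \<omega>) = 0)"
    using cross H_stop h unfolding crossing_property_def by blast
  then obtain N where N: "{\<omega>\<in>space M. \<not> \<not> (H \<omega> < \<infinity> \<and>
          (INF s\<in>{0..h}. Z (real_of_ereal (H \<omega>) + s) \<omega> - Z (real_of_ereal (H \<omega>)) \<omega>) = 0)} \<subseteq> N"
     "emeasure M N = 0" "N \<in> sets M" by (rule AE_E)
  have th: "t + h \<ge> 0" using t h by simp
  define B where "B n = DS (\<Delta> n) (\<Lambda>d n) (t + h)" for n
  have Bs: "range B \<subseteq> sets M" unfolding B_def using ds_props(1)[OF Dpos dsol th] by auto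
  have inc: "incseq B"
  proof (rule incseq_SucI)
    fix n
    show "B n \<subseteq> B (Suc n)"
    proof
      fix \<omega> assume "\<omega> \<in> B n"
      then obtain k :: nat where k: "\<omega> \<in> space M" "\<Delta> n * real k \<le> t + h"
        "X0 \<omega> + Z (\<Delta> n * real k) \<omega> \<le> \<Lambda>d n (\<Delta> n * real k)" unfolding B_def DS_def by blast
      obtain i where i: "\<Delta> n * real k = \<Delta> (Suc n) * real i" using nest_k by blast
      have "\<Lambda>d n (\<Delta> n * real k) \<le> \<Lambda>d (Suc n) (\<Delta> n * real k)" using Dpos[of n] by (intro Ld_mono_n) simp
      then show "\<omega> \<in> B (Suc n)" unfolding B_def DS_def using k i by (auto intro!: exI[of _ i])
    qed
  qed
  have l1: "(\<lambda>n. \<alpha> * measure M (B n)) \<longlonglongrightarrow> \<alpha> * measure M (\<Union> (range B))"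
    using finite_Lim_measure_incseq[OF Bs inc] by (intro tendsto_mult_left)
  have l2: "(\<lambda>n. \<alpha> * measure M (B n)) \<longlonglongrightarrow> L (t + h)"
    using L_lim[OF th] ds_props(2)[OF Dpos dsol th] unfolding B_def by simp
  have UB: "\<alpha> * measure M (\<Union> (range B)) = L (t + h)" using LIMSEQ_unique[OF l1 l2] .
  have sub: "EE t \<subseteq> N \<union> \<Union> (range B)"
  proof
    fix \<omega> assume E: "\<omega> \<in> EE t"
    show "\<omega> \<in> N \<union> \<Union> (range B)"
    proof (cases "\<omega> \<in> N")
      case True then show ?thesis by simp
    next
      case False
      have om: "\<omega> \<in> space M" and Ht: "H \<omega> \<le> ereal t" using E by auto
      have fin: "H \<omega> < \<infinity>" using Ht by (cases "H \<omega>") auto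
      have nz: "(INF s\<in>{0..h}. Z (real_of_ereal (H \<omega>) + s) \<omega> - Z (real_of_ereal (H \<omega>)) \<omega>) \<noteq> 0"
        using N(1) False om fin by blast
      obtain T where T: "T \<ge> 0" "H \<omega> = ereal T" "X0 \<omega> + Z T \<omega> - Lp T \<le> 0"
        using attain[OF om] fin by auto
      have Tt: "T \<le> t" using Ht T by simp
      define g where "g s = Z (T + s) \<omega> - Z T \<omega>" for s
      have nz': "(INF s\<in>{0..h}. g s) \<noteq> 0" using nz T unfolding g_def by simp
      have gc: "continuous_on {0..h} g"
      proof -
        have "continuous_on {0..h} (\<lambda>s. Z (T + s) \<omega>)"
          by (rule continuous_on_compose2[OF Zc[OF om]]) (auto intro!: continuous_intros simp: T(1))
        then show ?thesis unfolding g_def by (intro continuous_intros)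
      qed
      have bdd: "bdd_below (g ` {0..h})"
        by (intro bounded_imp_bdd_below compact_imp_bounded compact_continuous_image gc compact_Icc)
      have "(INF s\<in>{0..h}. g s) \<le> g 0" using bdd h by (intro cINF_lower) auto
      then have "(INF s\<in>{0..h}. g s) < 0" using nz' unfolding g_def by simp
      then obtain s where s: "s \<in> {0..h}" "g s < 0" using cINF_less_iff[OF _ bdd] h by auto
      have s0: "s > 0" using s unfolding g_def by (cases "s = 0") auto
      define u where "u = T + s"
      have u0: "u \<ge> 0" "T < u" using T(1) s0 unfolding u_def by auto
      have "X0 \<omega> + Z u \<omega> < X0 \<omega> + Z T \<omega>" using s unfolding g_def u_def by simp
      moreover have "Lp T \<le> L u" using T(1) u0 by (intro Lp_le_L)
      ultimately have Yu: "X0 \<omega> + Z u \<omega> < L u" using T(3) by linarith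
      define \<delta> where "\<delta> = L u - (X0 \<omega> + Z u \<omega>)"
      have d0: "\<delta> > 0" using Yu unfolding \<delta>_def by simp
      have ev1: "eventually (\<lambda>n. L u - \<delta>/2 < \<Lambda>d n u) sequentially"
        using L_lim[OF u0(1)] d0 by (intro order_tendstoD(1)) auto
      define gu where "gu n = \<Delta> n * real (nat \<lfloor>u / \<Delta> n\<rfloor>)" for n
      have gu: "gu n \<le> u" "u < gu n + \<Delta> n" "gu n \<ge> 0" for n
        using grid_nat[OF Dpos u0(1), of n] Dpos[of n] unfolding gu_def by auto
      have "(\<lambda>n. u - \<Delta> n) \<longlonglongrightarrow> u - 0" using D0 by (intro tendsto_diff tendsto_const)
      then have lo: "(\<lambda>n. u - \<Delta> n) \<longlonglongrightarrow> u" by simp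
      have "gu \<longlonglongrightarrow> u"
      proof (rule tendsto_sandwich[OF _ _ lo tendsto_const])
        show "\<forall>\<^sub>F n in sequentially. u - \<Delta> n \<le> gu n"
          using gu(2) by (intro always_eventually allI) (smt (verit))
        show "\<forall>\<^sub>F n in sequentially. gu n \<le> u" using gu(1) by simp
      qed
      then have "(\<lambda>n. X0 \<omega> + Z (gu n) \<omega>) \<longlonglongrightarrow> X0 \<omega> + Z u \<omega>"
        using continuous_on_tendsto_compose[OF Yc[OF om] \<open>gu \<longlonglongrightarrow> u\<close>] gu(3) u0 by simp
      then have ev2: "eventually (\<lambda>n. X0 \<omega> + Z (gu n) \<omega> < X0 \<omega> + Z u \<omega> + \<delta>/2) sequentially"
        using d0 by (intro order_tendstoD(2)) auto
      obtain n where n: "L u - \<delta>/2 < \<Lambda>d n u" "X0 \<omega> + Z (gu n) \<omega> < X0 \<omega> + Z u \<omega> + \<delta>/2"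
        using eventually_happens'[OF trivial_limit_sequentially eventually_conj[OF ev1 ev2]] by blast
      have "\<Lambda>d n (gu n) = \<Lambda>d n u" unfolding gu_def using ds_grid[OF Dpos dsol u0(1)] .
      moreover have "X0 \<omega> + Z (gu n) \<omega> < L u - \<delta>/2" using n(2) unfolding \<delta>_def by (simp add: field_simps)
      ultimately have "X0 \<omega> + Z (gu n) \<omega> \<le> \<Lambda>d n (gu n)" using n(1) by linarith
      moreover have "gu n \<le> t + h" using gu(1)[of n] s Tt unfolding u_def by auto
      ultimately have "\<omega> \<in> B n" unfolding B_def DS_def gu_def using om
        by (intro CollectI conjI exI[of _ "nat \<lfloor>u / \<Delta> n\<rfloor>"]) auto
      then show ?thesis by blast
    qed
  qed
  have UBs: "\<Union> (range B) \<in> sets M" using Bs by auto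
  have mN: "measure M N = 0" using N(2) by (simp add: measure_def)
  have "measure M (EE t) \<le> measure M (N \<union> \<Union> (range B))"
    using sub N(3) UBs by (intro finite_measure_mono) auto
  also have "\<dots> \<le> measure M N + measure M (\<Union> (range B))" using N(3) UBs by (rule measure_Un_le)
  finally have "measure M (EE t) \<le> measure M (\<Union> (range B))" using mN by simp
  then show ?thesis using UB apos by (metis mult_left_mono less_imp_le)
qed

lemma Lp_eq: assumes t: "t \<ge> 0" shows "Lp t = \<alpha> * measure M (EE t)"
proof (rule antisym)
  show "Lp t \<le> \<alpha> * measure M (EE t)" by (rule Lp_le_E[OF t])
  show "\<alpha> * measure M (EE t) \<le> Lp t" unfolding Lp_def
  proof (rule cInf_greatest)
    show "L ` {t<..} \<noteq> {}" by auto
    fix x assume "x \<in> L ` {t<..}"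
    then obtain v where v: "v > t" "x = L v" by auto
    then show "\<alpha> * measure M (EE t) \<le> x" using E_le_L[OF t, of "v - t"] by simp
  qed
qed

lemma Lp_sol: "MV_solution M X0 Z \<alpha> Lp"
  unfolding MV_solution_def H_def[symmetric] using E_sets Lp_eq by auto

lemma Lam_le_Lp: "t \<ge> 0 \<Longrightarrow> \<Lambda> t \<le> Lp t"
  using msol Lp_sol unfolding MV_minimal_solution_def by blast

lemma final:
  assumes t: "t \<ge> 0" and c: "isCont (ext0 (\<lambda>s. \<Lambda> s / \<alpha>)) t"
  shows "(\<lambda>n. \<Lambda>d n t / \<alpha>) \<longlonglongrightarrow> \<Lambda> t / \<alpha>"
proof -
  let ?f = "ext0 (\<lambda>s. \<Lambda> s / \<alpha>)"
  have lim: "(?f \<longlongrightarrow> ?f t) (at_left t)"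
    using c unfolding isCont_def by (rule tendsto_mono[OF at_le[OF subset_UNIV]])
  have ev: "eventually (\<lambda>s. s < t) (at_left t)" by (auto simp: eventually_at_filter)
  have "eventually (\<lambda>s. ?f s \<le> L t / \<alpha>) (at_left t)"
    using ev
  proof eventually_elim
    case (elim s)
    show ?case
    proof (cases "s < 0")
      case True then show ?thesis unfolding ext0_def using L_nonneg[OF t] apos by simp
    next
      case False
      then have "\<Lambda> s \<le> L t" using Lam_le_Lp[of s] Lp_le_L[of s t] elim by force
      then show ?thesis unfolding ext0_def using False apos by (simp add: divide_right_mono)
    qed
  qed
  then have "?f t \<le> L t / \<alpha>" using tendsto_upperbound[OF lim] trivial_limit_at_left_real by blast
  then have "\<Lambda> t \<le> L t" using t apos unfolding ext0_def by (simp add: divide_le_cancel)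
  then have "L t = \<Lambda> t" using L_le_Lam[OF t] by simp
  then show ?thesis using L_lim[OF t] apos by (intro tendsto_divide tendsto_const) auto
qed

end
theorem theorem2p9:
  fixes M :: "'a measure" and X0 :: "'a \<Rightarrow> real" and Z :: "real \<Rightarrow> 'a \<Rightarrow> real"
    and \<alpha> :: real and \<Lambda> :: "real \<Rightarrow> real" and \<Lambda>d :: "nat \<Rightarrow> real \<Rightarrow> real"
    and \<Delta> :: "nat \<Rightarrow> real"
  assumes "prob_space M"
    and "\<alpha> > 0"
    and "X0 \<in> borel_measurable M"
    and "\<forall>t\<ge>0. Z t \<in> borel_measurable M"
    and "\<forall>\<omega>\<in>space M. continuous_on {0..} (\<lambda>t. Z t \<omega>)"
    and "\<forall>\<omega>\<in>space M. Z 0 \<omega> = 0"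
    and "prob_space.indep_set M
           (sigma_sets (space M) {X0 -` B \<inter> space M | B. B \<in> sets borel})
           (sigma_sets (space M) {Z t -` B \<inter> space M | t B. 0 \<le> t \<and> B \<in> sets borel})"
    and "crossing_property M X0 Z"
    and "MV_minimal_solution M X0 Z \<alpha> \<Lambda>"
    and "\<forall>n. \<Delta> n > 0"
    and "\<forall>n. MV_disc_minimal_solution M X0 Z \<alpha> (\<Delta> n) (\<Lambda>d n)"
    and "\<forall>n. {\<Delta> n * real k | k. k \<in> (UNIV :: nat set)} \<subseteq> {\<Delta> (Suc n) * real k | k. k \<in> (UNIV :: nat set)}"
    and "\<Delta> \<longlonglongrightarrow> 0"
    and "(\<forall>x. measure M {\<omega>\<in>space M. X0 \<omega> = x} = 0) \<or>
         (\<forall>t>0. \<forall>x. measure M {\<omega>\<in>space M. Z t \<omega> = x} = 0)"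
  shows "\<forall>t\<ge>0. isCont (ext0 (\<lambda>s. \<Lambda> s / \<alpha>)) t \<longrightarrow>
           (\<lambda>n. \<Lambda>d n t / \<alpha>) \<longlonglongrightarrow> \<Lambda> t / \<alpha>"
  proof -
  interpret mvs2 M X0 Z \<alpha> \<Lambda> \<Lambda>d \<Delta>
  proof (intro mvs2.intro mvs.intro mvs2_axioms.intro mvs_axioms.intro)
    show "prob_space M" by (rule assms(1))
  qed (use assms in auto)
  show ?thesis using final by blast
qed

end
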